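(* Let $q\neq0$ and let $D\subseteq\mathbb C\setminus\{0\}$ satisfy $qD\subseteq D$. Suppose that for each integer $n\ge-1$ we are given functions $\tilde{\mathcal F}(\cdot;n),\tilde{\mathcal G}(\cdot;n):D\to\mathbb C$ and constants $\tilde\mu(n)$, with $\tilde\mu(-1)=0$ and $\tilde{\mathcal G}(z;-1)\neq0$ for all $z\in D$, satisfying for all $n\ge-1$ and $z\in D$ $$\tilde{\mathcal F}(qz;n+1)+\tilde{\mathcal G}(z;n+1)=\tilde{\mathcal F}(z;n)+\tilde{\mathcal G}(qz;n),$$ $$\tilde{\mathcal F}(z;n+1)\tilde{\mathcal G}(z;n+1)=\tilde{\mathcal F}(z;n)\tilde{\mathcal G}(z;n)+\tilde\mu(n)-\tilde\mu(n+1).$$ Define $\tilde{\mathcal P}_0\equiv1$ and, for $n\ge0$, $\tilde{\mathcal P}_{n+1}(z)=-\tilde{\mathcal G}(z;-1)\tilde{\mathcal P}_n(qz)+\tilde{\mathcal F}(z;n)\tilde{\mathcal P}_n(z)$. Then for every $n\ge0$: (i) $\tilde{\mathcal P}_n$ solves $$\tilde{\mathcal G}(qz;-1)\tilde{\mathcal P}_n(q^2z)-\big[\tilde{\mathcal F}(qz;n)+\tilde{\mathcal G}(z;n)\big]\tilde{\mathcal P}_n(qz)+\tilde{\mathcal F}(z;-1)\tilde{\mathcal P}_n(z)=0\quad(z\in D);$$ (ii) $-\tilde{\mathcal G}(z;-1)\tilde{\mathcal P}_{n+1}(qz)+\tilde{\mathcal G}(z;n)\tilde{\mathcal P}_{n+1}(z)=-\tilde\mu(n)\tilde{\mathcal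 P}_n(z)$; (iii) for $n\ge1$, $\tilde{\mathcal P}_{n+1}(z)+\tilde\mu(n-1)\tilde{\mathcal P}_{n-1}(z)=\big(\tilde{\mathcal F}(z;n)-\tilde{\mathcal G}(z;n-1)\big)\tilde{\mathcal P}_n(z)$. Moreover, if in addition there are constants $c_0(n),c_1(n)$ with $\tilde{\mathcal F}(z;n)-\tilde{\mathcal G}(z;n-1)=c_0(n)\chi(z)+c_1(n)$ for all $n\ge0$ and $z\in D$, then each $\tilde{\mathcal P}_n(z)$ is a polynomial in $\chi(z)$ of degree at most $n$.
   Context: $\chi(z)=\frac{z+z^{-1}}{2}$. The two displayed equations are the (q-version) Infeld–Hull factorization system: they express that, with $u_2(z)=-\tilde{\mathcal G}(z;-1)$, the operators $(u_2(z)\mathbf E_q+\tilde{\mathcal G}(z;n))(u_2(z)\mathbf E_q+\tilde{\mathcal F}(z;n))$ and $(u_2(z)\mathbf E_q+\tilde{\mathcal F}(z;n))(u_2(z)\mathbf E_q+\tilde{\mathcal G}(z;n))$ differ from consecutive members of one family of second-order operators by constants, where $(\mathbf E_qf)(z)=f(qz)$. *)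

theory Defs
  imports Complex_Main "HOL-Computational_Algebra.Polynomial"
begin

definition chi :: "complex \<Rightarrow> complex" where
  "chi z = (z + inverse z) / 2"

fun Pt :: "complex \<Rightarrow> (complex \<Rightarrow> int \<Rightarrow> complex) \<Rightarrow> (complex \<Rightarrow> int \<Rightarrow> complex)
            \<Rightarrow> nat \<Rightarrow> complex \<Rightarrow> complex" where
  "Pt q F G 0 z = 1"
| "Pt q F G (Suc n) z = - G z (-1) * Pt q F G n (q * z) + F z (int n) * Pt q F G n z"

end

theory Submission
  imports Defs
begin

lemma stepI:
  fixes a b c d g0 g1 g2 Fn0 Fn1 Fn2 hA hB Fm0 Fm1 m :: complex
  assumes I0: "g1*c - (Fn1+hA)*b + Fm0*a = 0"
  and I1: "g2*d - (Fn2+hB)*c + Fm1*b = 0"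
  and T0: "Fn0*hA = Fm0*g0 - m"
  and T1: "Fn1*hB = Fm1*g1 - m"
  shows "g0*(g1*(-g2*d + Fn2*c) - (Fn0+hB)*(-g1*c+Fn1*b) + Fm0*(-g0*b+Fn0*a)) = 0"
proof -
  have "g0*(g1*(-g2*d + Fn2*c) - (Fn0+hB)*(-g1*c+Fn1*b) + Fm0*(-g0*b+Fn0*a))
    = Fn0*g0*(g1*c - (Fn1+hA)*b + Fm0*a) - g0*g1*(g2*d - (Fn2+hB)*c + Fm1*b)
      + g0*b*(Fn0*hA - (Fm0*g0 - m)) - g0*b*(Fn1*hB - (Fm1*g1 - m))"
    by (simp add: algebra_simps)
  also have "\<dots> = 0" using I0 I1 T0 T1 by simp
  finally show ?thesis .
qed

lemma stepII:
  fixes a b c g0 g1 Fn0 Fn1 hA Fm0 m :: complex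
  assumes I0: "g1*c - (Fn1+hA)*b + Fm0*a = 0"
  and T0: "Fn0*hA = Fm0*g0 - m"
  shows "- g0 * (-g1*c + Fn1*b) + hA * (-g0*b + Fn0*a) = - m * a"
proof -
  have "- g0 * (-g1*c + Fn1*b) + hA * (-g0*b + Fn0*a)
     = g0*(g1*c - (Fn1+hA)*b + Fm0*a) + a*(Fn0*hA - (Fm0*g0 - m)) - m*a"
    by (simp add: algebra_simps)
  also have "\<dots> = - m * a" using I0 T0 by simp
  finally show ?thesis .
qed

theorem proposition2:
  fixes q :: complex and D :: "complex set"
    and F G :: "complex \<Rightarrow> int \<Rightarrow> complex" and mu :: "int \<Rightarrow> complex"
  assumes hq: "q \<noteq> 0"
    and hD: "D \<subseteq> - {0}"
    and hqD: "(\<lambda>z. q * z) ` D \<subseteq> D"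
    and hmu: "mu (-1) = 0"
    and hG: "\<forall>z\<in>D. G z (-1) \<noteq> 0"
    and h1: "\<forall>n\<ge>-1. \<forall>z\<in>D. F (q * z) (n + 1) + G z (n + 1) = F z n + G (q * z) n"
    and h2: "\<forall>n\<ge>-1. \<forall>z\<in>D. F z (n + 1) * G z (n + 1) = F z n * G z n + mu n - mu (n + 1)"
  shows "(\<forall>n::nat. \<forall>z\<in>D.
            G (q * z) (-1) * Pt q F G n (q\<^sup>2 * z)
            - (F (q * z) (int n) + G z (int n)) * Pt q F G n (q * z)
            + F z (-1) * Pt q F G n z = 0)
       \<and> (\<forall>n::nat. \<forall>z\<in>D.
            - G z (-1) * Pt q F G (Suc n) (q * z) + G z (int n) * Pt q F G (Suc n) z
            = - mu (int n) * Pt q F G n z)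
       \<and> (\<forall>n::nat. n \<ge> 1 \<longrightarrow> (\<forall>z\<in>D.
            Pt q F G (Suc n) z + mu (int n - 1) * Pt q F G (n - 1) z
            = (F z (int n) - G z (int n - 1)) * Pt q F G n z))
       \<and> ((\<exists>c0 c1 :: nat \<Rightarrow> complex. \<forall>n::nat. \<forall>z\<in>D.
             F z (int n) - G z (int n - 1) = c0 n * chi z + c1 n)
          \<longrightarrow> (\<forall>n::nat. \<exists>p :: complex poly. degree p \<le> n \<and>
                 (\<forall>z\<in>D. Pt q F G n z = poly p (chi z))))"
proof -
  let ?P = "Pt q F G"
  have qD: "\<And>z. z \<in> D \<Longrightarrow> q * z \<in> D" using hqD by blast
  have q2: "\<And>z. q * (q * z) = q\<^sup>2 * z" by (simp add: power2_eq_square)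
  have T: "\<forall>z\<in>D. F z (int n) * G z (int n) = F z (-1) * G z (-1) - mu (int n)" for n
  proof (induction n)
    case 0
    show ?case using h2[rule_format, of "-1"] hmu by simp
  next
    case (Suc n)
    show ?case
    proof
      fix z assume z: "z \<in> D"
      have "F z (int n + 1) * G z (int n + 1) = F z (int n) * G z (int n) + mu (int n) - mu (int n + 1)"
        using h2[rule_format, of "int n" z] z by simp
      then have X: "F z (int n + 1) * G z (int n + 1) = F z (-1) * G z (-1) - mu (int n + 1)"
        using Suc z by simp
      have e: "int (Suc n) = int n + 1" by simp
      show "F z (int (Suc n)) * G z (int (Suc n)) = F z (-1) * G z (-1) - mu (int (Suc n))"
        by (simp only: e X)
    qed
  qed
  have H1: "F (q * z) (int n + 1) + G z (int n + 1) = F z (int n) + G (q * z) (int n)"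
    if "z \<in> D" for z n using h1[rule_format, of "int n" z] that by simp
  define L where "L n z = G (q * z) (-1) * ?P n (q\<^sup>2 * z)
            - (F (q * z) (int n) + G z (int n)) * ?P n (q * z)
            + F z (-1) * ?P n z" for n z
  have I: "\<forall>z\<in>D. L n z = 0" for n
  proof (induction n)
    case 0
    show ?case
    proof
      fix z assume z: "z \<in> D"
      show "L 0 z = 0" using h1[rule_format, of "-1" z] z by (simp add: L_def)
    qed
  next
    case (Suc n)
    show ?case
    proof
      fix z assume z: "z \<in> D"
      have z1: "q * z \<in> D" using qD z .
      have I0: "L n z = 0" using Suc z by blast
      have I1: "L n (q * z) = 0" using Suc z1 by blast
      have g0: "G z (-1) \<noteq> 0" using hG z by blast
      have q3: "q * (q\<^sup>2 * z) = q\<^sup>2 * (q * z)" by (simp add: algebra_simps)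
      have S: "G z (-1) * (G (q*z) (-1) * (- G (q\<^sup>2*z) (-1) * ?P n (q\<^sup>2 * (q * z)) + F (q\<^sup>2*z) (int n) * ?P n (q\<^sup>2*z))
           - (F z (int n) + G (q*z) (int n)) * (- G (q*z) (-1) * ?P n (q\<^sup>2*z) + F (q*z) (int n) * ?P n (q*z))
           + F z (-1) * (- G z (-1) * ?P n (q*z) + F z (int n) * ?P n z)) = 0"
      proof (rule stepI[where a="?P n z" and b="?P n (q*z)" and c="?P n (q\<^sup>2*z)" and d="?P n (q\<^sup>2 * (q * z))"
          and hA="G z (int n)" and hB="G (q*z) (int n)"])
        show "G (q*z) (-1) * ?P n (q\<^sup>2*z) - (F (q*z) (int n) + G z (int n)) * ?P n (q*z) + F z (-1) * ?P n z = 0"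
          using I0 by (simp add: L_def)
        show "G (q\<^sup>2*z) (-1) * ?P n (q\<^sup>2 * (q * z)) - (F (q\<^sup>2*z) (int n) + G (q*z) (int n)) * ?P n (q\<^sup>2*z) + F (q*z) (-1) * ?P n (q*z) = 0"
          using I1 by (simp add: L_def q2)
        show "F z (int n) * G z (int n) = F z (-1) * G z (-1) - mu (int n)" using T z by blast
        show "F (q*z) (int n) * G (q*z) (int n) = F (q*z) (-1) * G (q*z) (-1) - mu (int n)" using T z1 by blast
      qed
      have e: "int (Suc n) = int n + 1" by simp
      have "G z (-1) * L (Suc n) z = 0"
        unfolding L_def e H1[OF z, of n] using S
        by (simp add: q2 q3)
      then show "L (Suc n) z = 0" using g0 by simp
    qed
  qed
  have II: "- G z (-1) * ?P (Suc n) (q * z) + G z (int n) * ?P (Suc n) z = - mu (int n) * ?P n z"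
    if z: "z \<in> D" for n z
  proof -
    have I0: "L n z = 0" using I z by blast
    show ?thesis
      using stepII[OF I0[unfolded L_def] T[rule_format, OF z]]
      by (simp add: q2)
  qed
  have III: "?P (Suc n) z + mu (int n - 1) * ?P (n - 1) z
            = (F z (int n) - G z (int n - 1)) * ?P n z" if n: "n \<ge> 1" and z: "z \<in> D" for n z
  proof -
    obtain k where k: "n = Suc k" using n by (cases n) auto
    have "- G z (-1) * ?P n (q * z) + G z (int k) * ?P n z = - mu (int k) * ?P k z"
      using II[OF z, of k] k by simp
    then show ?thesis using k by (simp add: algebra_simps)
  qed
  have IV: "\<forall>n::nat. \<exists>p :: complex poly. degree p \<le> n \<and> (\<forall>z\<in>D. ?P n z = poly p (chi z))"
    if hc: "\<forall>n::nat. \<forall>z\<in>D. F z (int n) - G z (int n - 1) = c0 n * chi z + c1 n" for c0 c1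
  proof -
    have "(\<exists>p :: complex poly. degree p \<le> n \<and> (\<forall>z\<in>D. ?P n z = poly p (chi z)))
        \<and> (\<exists>p :: complex poly. degree p \<le> Suc n \<and> (\<forall>z\<in>D. ?P (Suc n) z = poly p (chi z)))" for n
    proof (induction n)
      case 0
      have "\<forall>z\<in>D. ?P 1 z = poly [:c1 0, c0 0:] (chi z)"
      proof
        fix z assume z: "z \<in> D"
        have "F z 0 - G z (-1) = c0 0 * chi z + c1 0" using hc[rule_format, OF z, of 0] by simp
        then show "?P 1 z = poly [:c1 0, c0 0:] (chi z)" by (simp add: algebra_simps)
      qed
      moreover have "degree [:c1 0, c0 0:] \<le> 1" by simp
      ultimately show ?case by (intro conjI exI[of _ "[:1:]"] exI[of _ "[:c1 0, c0 0:]"]) auto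
    next
      case (Suc n)
      then obtain p r where p: "degree p \<le> n" "\<forall>z\<in>D. ?P n z = poly p (chi z)"
        and r: "degree r \<le> Suc n" "\<forall>z\<in>D. ?P (Suc n) z = poly r (chi z)" by blast
      define s where "s = [:c1 (Suc n), c0 (Suc n):] * r - smult (mu (int n)) p"
      have "degree ([:c1 (Suc n), c0 (Suc n):] * r) \<le> Suc (Suc n)"
      proof -
        have "degree [:c1 (Suc n), c0 (Suc n):] \<le> 1" by simp
        then show ?thesis using degree_mult_le[of "[:c1 (Suc n), c0 (Suc n):]" r] r(1) by linarith
      qed
      moreover have "degree (smult (mu (int n)) p) \<le> Suc (Suc n)"
        using p(1) degree_smult_le[of "mu (int n)" p] by linarith
      ultimately have ds: "degree s \<le> Suc (Suc n)" unfolding s_def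
        using degree_diff_le by blast
      have "\<forall>z\<in>D. ?P (Suc (Suc n)) z = poly s (chi z)"
      proof
        fix z assume z: "z \<in> D"
        have A: "?P (Suc (Suc n)) z + mu (int n) * ?P n z
            = (F z (int (Suc n)) - G z (int (Suc n) - 1)) * ?P (Suc n) z"
          using III[of "Suc n" z] z by (simp del: Pt.simps)
        have B: "F z (int (Suc n)) - G z (int (Suc n) - 1) = c0 (Suc n) * chi z + c1 (Suc n)"
          using hc z by blast
        have C: "?P n z = poly p (chi z)" "?P (Suc n) z = poly r (chi z)" using p(2) r(2) z by blast+
        have "?P (Suc (Suc n)) z = (c0 (Suc n) * chi z + c1 (Suc n)) * poly r (chi z) - mu (int n) * poly p (chi z)"
          using A unfolding B C by (simp only: eq_diff_eq)
        then show "?P (Suc (Suc n)) z = poly s (chi z)"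
          by (simp add: s_def algebra_simps del: Pt.simps)
      qed
      then show ?case using r ds by blast
    qed
    then show ?thesis by blast
  qed
  show ?thesis
    using I II III IV unfolding L_def by blast
qed

end
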